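(* Assume $\Gamma^{orb}$ is a bamboo with nodes $n_1,\dots,n_k$ in order along it. Let $\alpha\in\mathbb R_{\ge0}\langle\mathfrak v_1,\dots,\mathfrak v_k\rangle$ and let $\beta=\sum_{\ell=1}^k\beta_\ell E_{n_\ell}\in\alpha-\mathbb R_{\ge0}\langle\mathfrak v_1,\mathfrak v_k\rangle$ be such that not all $\beta_\ell$ are negative. Then there exist $1\le i\le j\le k$ such that $$\beta_1,\dots,\beta_{i-1}<0,\qquad \beta_i,\dots,\beta_j\ge0,\qquad \beta_{j+1},\dots,\beta_k<0.$$
   Context: $\Gamma$ is a connected negative definite plumbing graph which is a tree with all genera $0$; $\mathcal N$ is its set of nodes (vertices of valency $\ge3$). $L=\bigoplus\mathbb ZE_v$ with the intersection form, and $E_v^*\in L\otimes\mathbb Q$ is defined by $(E^*_v,E_w)=-\delta_{vw}$. The orbifold graph $\Gamma^{orb}$ has vertex set $\mathcal N$, with $n,n'$ adjacent iff the path between them in $\Gamma$ has only valency-$2$ interior vertices; bamboo means no vertex of valency $\ge3$. $\pi_{\mathcal N}$ is the projection of $L\otimes\mathbb R$ onto $\bigoplus_{n\in\mathcal N}\mathbb RE_n$ forgetting non-node coordinates, and $\mathfrak v_i:=\pi_{\mathcal N}(E^*_{n_i})=\sum_\ell -(E^*_{n_i},E^*_{n_\ell})E_{n_\ell}$ (all coordinates positive). *)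

theory Defs
  imports Complex_Main
begin

text \<open>A plumbing graph: finite vertex set V, symmetric irreflexive adjacency adj on V,
  Euler numbers (self-intersections) e. Genera are all 0 and play no role in the form.\<close>

definition graph_on :: "'v set \<Rightarrow> ('v \<Rightarrow> 'v \<Rightarrow> bool) \<Rightarrow> bool" where
  "graph_on V adj \<longleftrightarrow> finite V \<and> (\<forall>u w. adj u w \<longrightarrow> u \<in> V \<and> w \<in> V)
     \<and> (\<forall>u w. adj u w \<longrightarrow> adj w u) \<and> (\<forall>u. \<not> adj u u)"

definition is_path :: "('v \<Rightarrow> 'v \<Rightarrow> bool) \<Rightarrow> 'v list \<Rightarrow> 'v \<Rightarrow> 'v \<Rightarrow> bool" where
  "is_path adj p u w \<longleftrightarrow> p \<noteq> [] \<and> hd p = u \<and> last p = w \<and> distinct p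
     \<and> (\<forall>i. Suc i < length p \<longrightarrow> adj (p ! i) (p ! Suc i))"

definition is_tree :: "'v set \<Rightarrow> ('v \<Rightarrow> 'v \<Rightarrow> bool) \<Rightarrow> bool" where
  "is_tree V adj \<longleftrightarrow> graph_on V adj \<and> V \<noteq> {} \<and>
     (\<forall>u\<in>V. \<forall>w\<in>V. \<exists>!p. is_path adj p u w)"

definition valency :: "'v set \<Rightarrow> ('v \<Rightarrow> 'v \<Rightarrow> bool) \<Rightarrow> 'v \<Rightarrow> nat" where
  "valency V adj v = card {w \<in> V. adj v w}"

definition nodes :: "'v set \<Rightarrow> ('v \<Rightarrow> 'v \<Rightarrow> bool) \<Rightarrow> 'v set" where
  "nodes V adj = {v \<in> V. valency V adj v \<ge> 3}"

definition orb_adj :: "'v set \<Rightarrow> ('v \<Rightarrow> 'v \<Rightarrow> bool) \<Rightarrow> 'v \<Rightarrow> 'v \<Rightarrow> bool" where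
  "orb_adj V adj n n' \<longleftrightarrow> n \<in> nodes V adj \<and> n' \<in> nodes V adj \<and> n \<noteq> n' \<and>
     (\<forall>p. is_path adj p n n' \<longrightarrow>
        (\<forall>i. 0 < i \<and> i < length p - 1 \<longrightarrow> valency V adj (p ! i) = 2))"

definition int_form :: "('v \<Rightarrow> 'v \<Rightarrow> bool) \<Rightarrow> ('v \<Rightarrow> int) \<Rightarrow> 'v \<Rightarrow> 'v \<Rightarrow> real" where
  "int_form adj e u w = (if u = w then real_of_int (e u) else if adj u w then 1 else 0)"

text \<open>Bilinear extension to L \<otimes> R, vectors given by coordinates 'v \<Rightarrow> real on V.\<close>
definition pair :: "'v set \<Rightarrow> ('v \<Rightarrow> 'v \<Rightarrow> bool) \<Rightarrow> ('v \<Rightarrow> int) \<Rightarrow> ('v \<Rightarrow> real) \<Rightarrow> ('v \<Rightarrow> real) \<Rightarrow> real" where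
  "pair V adj e x y = (\<Sum>u\<in>V. \<Sum>w\<in>V. x u * y w * int_form adj e u w)"

definition neg_definite :: "'v set \<Rightarrow> ('v \<Rightarrow> 'v \<Rightarrow> bool) \<Rightarrow> ('v \<Rightarrow> int) \<Rightarrow> bool" where
  "neg_definite V adj e \<longleftrightarrow> (\<forall>x. (\<exists>v\<in>V. x v \<noteq> 0) \<longrightarrow> pair V adj e x x < 0)"

definition basisE :: "'v \<Rightarrow> 'v \<Rightarrow> real" where
  "basisE w = (\<lambda>u. if u = w then 1 else 0)"

definition dualE :: "'v set \<Rightarrow> ('v \<Rightarrow> 'v \<Rightarrow> bool) \<Rightarrow> ('v \<Rightarrow> int) \<Rightarrow> 'v \<Rightarrow> 'v \<Rightarrow> real" where
  "dualE V adj e v = (THE c. (\<forall>u. u \<notin> V \<longrightarrow> c u = 0) \<and>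
      (\<forall>w\<in>V. pair V adj e c (basisE w) = - (if v = w then 1 else 0)))"

text \<open>v_frak n = pi_N(E_n^*) = sum over nodes m of -(E_n^*, E_m^*) E_m
  (coordinates on nodes; zero elsewhere).\<close>
definition vfrak :: "'v set \<Rightarrow> ('v \<Rightarrow> 'v \<Rightarrow> bool) \<Rightarrow> ('v \<Rightarrow> int) \<Rightarrow> 'v \<Rightarrow> 'v \<Rightarrow> real" where
  "vfrak V adj e n = (\<lambda>m. if m \<in> nodes V adj
      then - pair V adj e (dualE V adj e n) (dualE V adj e m) else 0)"

end

theory Submission
  imports Defs "HOL-Library.Function_Algebras"
begin

definition sc :: "real \<Rightarrow> ('v \<Rightarrow> real) \<Rightarrow> ('v \<Rightarrow> real)" where
  "sc r f = (\<lambda>x. r * f x)"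

interpretation fvs: vector_space "sc :: real \<Rightarrow> ('v \<Rightarrow> real) \<Rightarrow> _"
  by unfold_locales (auto simp: sc_def fun_eq_iff algebra_simps)

lemma sum_fun_apply: "finite A \<Longrightarrow> (\<Sum>i\<in>A. f i) x = (\<Sum>i\<in>A. f i x)"
  by (induction A rule: finite_induct) auto

lemma mult_delta: "(c::real) * (if P then 1 else 0) = (if P then c else 0)" by simp

lemma span_supported:
  assumes "finite V" "x \<in> fvs.span (basisE ` V)" "u \<notin> V"
  shows "x u = 0"
proof -
  have fin: "finite (basisE ` V)" using assms(1) by simp
  obtain c where "x = (\<Sum>b\<in>basisE ` V. sc (c b) b)"
    using assms(2) fvs.span_finite[OF fin] by auto
  then have "x u = (\<Sum>b\<in>basisE ` V. c b * b u)"
    using fin by (simp add: sum_fun_apply sc_def)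
  also have "\<dots> = 0" using assms(3) by (intro sum.neutral) (auto simp: basisE_def)
  finally show ?thesis .
qed

lemma supported_span:
  assumes "finite V" "\<forall>u. u \<notin> V \<longrightarrow> x u = 0"
  shows "x \<in> fvs.span (basisE ` V)"
proof -
  have "x = (\<Sum>w\<in>V. sc (x w) (basisE w))"
  proof
    fix u
    show "x u = (\<Sum>w\<in>V. sc (x w) (basisE w)) u"
      using assms by (cases "u \<in> V") (auto simp: sum_fun_apply[OF assms(1)] sc_def basisE_def mult_delta)
  qed
  also have "\<dots> \<in> fvs.span (basisE ` V)"
    by (intro fvs.span_sum fvs.span_scale fvs.span_base) auto
  finally show ?thesis .
qed

lemma surj_from_inj:
  fixes V :: "'v set" and F :: "'v \<Rightarrow> 'v \<Rightarrow> real"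
  defines "T \<equiv> (\<lambda>x w. if w \<in> V then (\<Sum>u\<in>V. x u * F u w) else 0)"
  assumes fin: "finite V"
    and ker: "\<And>x. (\<forall>u. u \<notin> V \<longrightarrow> x u = 0) \<Longrightarrow> (\<forall>w\<in>V. (\<Sum>u\<in>V. x u * F u w) = 0) \<Longrightarrow> \<forall>u\<in>V. x u = 0"
    and z: "\<forall>u. u \<notin> V \<longrightarrow> z u = 0"
  shows "\<exists>x. (\<forall>u. u \<notin> V \<longrightarrow> x u = 0) \<and> (\<forall>w\<in>V. (\<Sum>u\<in>V. x u * F u w) = z w)"
proof -
  let ?B = "basisE ` V"
  have lin: "Vector_Spaces.linear sc sc T"
    unfolding linear_iff_module_hom
    by (rule module_hom.intro, unfold_locales)
       (auto simp: T_def sc_def fun_eq_iff sum.distrib sum_distrib_left algebra_simps)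
  interpret lin: Vector_Spaces.linear sc sc T by (rule lin)
  have supp: "\<forall>u. u \<notin> V \<longrightarrow> x u = 0" if "x \<in> fvs.span ?B" for x
    using span_supported[OF fin that] by blast
  have inj: "inj_on T (fvs.span ?B)"
  proof (rule inj_onI)
    fix x y assume xy: "x \<in> fvs.span ?B" "y \<in> fvs.span ?B" "T x = T y"
    have s: "\<forall>u. u \<notin> V \<longrightarrow> (x - y) u = 0" using supp[OF xy(1)] supp[OF xy(2)] by simp
    have "\<forall>w\<in>V. (\<Sum>u\<in>V. (x - y) u * F u w) = 0"
    proof
      fix w assume w: "w \<in> V"
      have "T x w = T y w" using xy by simp
      then show "(\<Sum>u\<in>V. (x - y) u * F u w) = 0"
        using w by (simp add: T_def algebra_simps sum_subtractf)
    qed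
    from ker[OF s this] s show "x = y" by (auto simp: fun_eq_iff)
  qed
  have indB: "fvs.independent ?B"
  proof -
    have "fvs.independent ?B" if "finite V" 
      using that
    proof (induction V rule: finite_induct)
      case empty then show ?case by (simp add: fvs.independent_empty)
    next
      case (insert v W)
      have "basisE v \<notin> fvs.span (basisE ` W)"
      proof
        assume "basisE v \<in> fvs.span (basisE ` W)"
        from span_supported[OF insert(1) this insert(2)] show False by (simp add: basisE_def)
      qed
      then show ?case using insert by (simp add: fvs.independent_insert)
    qed
    then show ?thesis using fin by simp
  qed
  have injB: "inj_on basisE V"
    by (rule inj_onI) (metis basisE_def zero_neq_one)
  have indTB: "fvs.independent (T ` ?B)"
    by (rule lin.independent_injective_image[OF indB inj])
  have cardTB: "card (T ` ?B) = card V"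
    using card_image[OF inj_on_subset[OF inj fvs.span_superset]] card_image[OF injB] by simp
  have TBsub: "T ` ?B \<subseteq> fvs.span ?B"
  proof
    fix t assume "t \<in> T ` ?B"
    then obtain b where tb: "t = T b" by blast
    have "\<forall>u. u \<notin> V \<longrightarrow> t u = 0" unfolding tb T_def by simp
    then show "t \<in> fvs.span ?B" by (rule supported_span[OF fin])
  qed
  have zspan: "z \<in> fvs.span (T ` ?B)"
  proof (rule ccontr)
    assume nz: "z \<notin> fvs.span (T ` ?B)"
    have zn: "z \<notin> T ` ?B" using nz fvs.span_base[of z "T ` ?B"] by blast
    have ind2: "fvs.independent (insert z (T ` ?B))"
      using fvs.independent_insertI[OF nz indTB] .
    have sub2: "insert z (T ` ?B) \<subseteq> fvs.span ?B"
      using TBsub supported_span[OF fin z] by (rule insert_subsetI[rotated])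
    have "card (insert z (T ` ?B)) \<le> card ?B"
      using fvs.independent_span_bound[OF _ ind2 sub2] fin by simp
    moreover have "card (insert z (T ` ?B)) = card V + 1"
      using zn cardTB fin by (simp add: card_insert_if)
    moreover have "card ?B = card V" using card_image[OF injB] .
    ultimately show False by simp
  qed
  then obtain x where x: "x \<in> fvs.span ?B" "T x = z"
    using lin.span_image by auto
  show ?thesis
  proof (intro exI conjI)
    show "\<forall>u. u \<notin> V \<longrightarrow> x u = 0" using supp x(1) by blast
    show "\<forall>w\<in>V. (\<Sum>u\<in>V. x u * F u w) = z w"
    proof
      fix w assume w: "w \<in> V"
      have "T x w = z w" using x(2) by simp
      then show "(\<Sum>u\<in>V. x u * F u w) = z w" using w by (simp add: T_def)
    qed
  qed
qed


lemma mult_delta2: "(a::real) * (if P then 1 else 0) * b = (if P then a * b else 0)" by simp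

lemma pair_basis:
  assumes "finite V" "w \<in> V"
  shows "pair V adj e x (basisE w) = (\<Sum>u\<in>V. x u * int_form adj e u w)"
  unfolding pair_def basisE_def using assms by (simp add: mult_delta2)

lemma pair_expand:
  assumes "finite V"
  shows "pair V adj e x z = (\<Sum>w\<in>V. z w * (\<Sum>u\<in>V. x u * int_form adj e u w))"
  unfolding pair_def by (subst sum.swap) (simp add: sum_distrib_left algebra_simps)

lemma int_form_sym: "graph_on V adj \<Longrightarrow> int_form adj e u w = int_form adj e w u"
  unfolding int_form_def graph_on_def by auto

lemma pair_sym:
  assumes "graph_on V adj"
  shows "pair V adj e x z = pair V adj e z x"
  unfolding pair_def
  by (subst sum.swap) (simp add: int_form_sym[OF assms, of e] algebra_simps)

lemma dual_char:
  assumes g: "graph_on V adj" and negdef: "neg_definite V adj e" and n: "n \<in> V"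
  shows "(\<forall>u. u \<notin> V \<longrightarrow> dualE V adj e n u = 0) \<and>
         (\<forall>w\<in>V. (\<Sum>u\<in>V. dualE V adj e n u * int_form adj e u w) = - (if n = w then 1 else 0))"
proof -
  have fin: "finite V" using g by (simp add: graph_on_def)
  let ?F = "int_form adj e"
  let ?P = "\<lambda>c. (\<forall>u. u \<notin> V \<longrightarrow> c u = 0) \<and>
      (\<forall>w\<in>V. pair V adj e c (basisE w) = - (if n = w then 1 else 0))"
  have ker: "\<forall>u\<in>V. x u = 0"
    if s: "\<forall>u. u \<notin> V \<longrightarrow> x u = 0" and k: "\<forall>w\<in>V. (\<Sum>u\<in>V. x u * ?F u w) = 0" for x
  proof (rule ccontr)
    assume "\<not> (\<forall>u\<in>V. x u = 0)"
    then have "pair V adj e x x < 0" using negdef by (auto simp: neg_definite_def)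
    moreover have "pair V adj e x x = 0" using k by (simp add: pair_expand[OF fin])
    ultimately show False by simp
  qed
  have ex: "\<exists>c. ?P c"
  proof -
    have z: "\<forall>u. u \<notin> V \<longrightarrow> (\<lambda>w. - (if n = w then 1 else 0 :: real)) u = 0" using n by auto
    from surj_from_inj[OF fin, of ?F, OF ker z]
    obtain c where "(\<forall>u. u \<notin> V \<longrightarrow> c u = 0) \<and> (\<forall>w\<in>V. (\<Sum>u\<in>V. c u * ?F u w) = - (if n = w then 1 else 0))"
      by blast
    then show ?thesis by (intro exI[of _ c]) (simp add: pair_basis[OF fin])
  qed
  have uniq: "c = d" if "?P c" "?P d" for c d
  proof -
    have s: "\<forall>u. u \<notin> V \<longrightarrow> (c - d) u = 0" using that by simp
    have "\<forall>w\<in>V. (\<Sum>u\<in>V. (c - d) u * ?F u w) = 0"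
    proof
      fix w assume w: "w \<in> V"
      have "(\<Sum>u\<in>V. (c - d) u * ?F u w) = (\<Sum>u\<in>V. c u * ?F u w) - (\<Sum>u\<in>V. d u * ?F u w)"
        by (simp add: algebra_simps sum_subtractf)
      also have "\<dots> = 0" using that w by (simp add: pair_basis[OF fin])
      finally show "(\<Sum>u\<in>V. (c - d) u * ?F u w) = 0" .
    qed
    from ker[OF s this] s show ?thesis by (auto simp: fun_eq_iff)
  qed
  have "?P (dualE V adj e n)"
  proof -
    have "\<exists>!c. ?P c" using ex uniq by blast
    then show ?thesis unfolding dualE_def by (rule theI')
  qed
  then show ?thesis by (simp add: pair_basis[OF fin])
qed

lemma vfrak_dual:
  assumes g: "graph_on V adj" and negdef: "neg_definite V adj e" and n: "n \<in> V"
    and m: "m \<in> nodes V adj"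
  shows "vfrak V adj e n m = dualE V adj e n m"
proof -
  have fin: "finite V" using g by (simp add: graph_on_def)
  have mV: "m \<in> V" using m by (simp add: nodes_def)
  have "pair V adj e (dualE V adj e n) (dualE V adj e m) = pair V adj e (dualE V adj e m) (dualE V adj e n)"
    by (rule pair_sym[OF g])
  also have "\<dots> = (\<Sum>w\<in>V. dualE V adj e n w * - (if m = w then 1 else 0))"
    using dual_char[OF g negdef mV] by (simp add: pair_expand[OF fin])
  also have "\<dots> = - dualE V adj e n m"
    using mV fin by (simp add: if_distrib sum.delta cong: if_cong)
  finally show ?thesis using m by (simp add: vfrak_def)
qed


lemma energy:
  fixes F :: "'v \<Rightarrow> 'v \<Rightarrow> real" and y :: "'v \<Rightarrow> real"
  assumes fin: "finite V" and SV: "S \<subseteq> V"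
    and off: "\<forall>u v. u \<noteq> v \<longrightarrow> F u v \<ge> 0"
    and harm: "\<forall>v\<in>S. (\<Sum>u\<in>V. y u * F u v) \<le> 0"
    and bd: "\<forall>v\<in>S. \<forall>u\<in>V. u \<notin> S \<longrightarrow> F u v > 0 \<longrightarrow> y u \<ge> 0"
  defines "w \<equiv> (\<lambda>u. if u \<in> S then min (y u) 0 else 0)"
  shows "(\<Sum>u\<in>V. \<Sum>v\<in>V. w u * w v * F u v) \<ge> 0"
proof -
  have t: "w v * y u * F u v \<le> w u * w v * F u v" if u: "u \<in> V" and v: "v \<in> V" for u v
  proof (cases "v \<in> S")
    case False then show ?thesis by (simp add: w_def)
  next
    case vS: True
    have wv: "w v \<le> 0" using vS by (simp add: w_def)
    show ?thesis
    proof (cases "u = v")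
      case True then show ?thesis using vS by (cases "y v < 0") (simp_all add: w_def min_def)
    next
      case uv: False
      have Fn: "F u v \<ge> 0" using off uv by blast
      have "(y u - w u) * F u v \<ge> 0"
      proof (cases "u \<in> S")
        case True then show ?thesis using Fn by (simp add: w_def)
      next
        case False
        then have "F u v > 0 \<longrightarrow> y u \<ge> 0" using bd vS u by blast
        then show ?thesis using False Fn by (cases "F u v > 0") (auto simp: w_def)
      qed
      then have "w v * ((y u - w u) * F u v) \<le> 0" using wv by (simp add: mult_nonpos_nonneg)
      then show ?thesis by (simp add: algebra_simps)
    qed
  qed
  have "(\<Sum>u\<in>V. \<Sum>v\<in>V. w v * y u * F u v) = (\<Sum>v\<in>V. w v * (\<Sum>u\<in>V. y u * F u v))"
    by (subst sum.swap) (simp add: sum_distrib_left algebra_simps)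
  also have "\<dots> \<ge> 0"
  proof (rule sum_nonneg)
    fix v assume v: "v \<in> V"
    show "w v * (\<Sum>u\<in>V. y u * F u v) \<ge> 0"
    proof (cases "v \<in> S")
      case True
      then have "w v \<le> 0" "(\<Sum>u\<in>V. y u * F u v) \<le> 0" using harm by (auto simp: w_def)
      then show ?thesis by (simp add: mult_nonpos_nonpos)
    next
      case False then show ?thesis by (simp add: w_def)
    qed
  qed
  finally have "0 \<le> (\<Sum>u\<in>V. \<Sum>v\<in>V. w v * y u * F u v)" .
  also have "\<dots> \<le> (\<Sum>u\<in>V. \<Sum>v\<in>V. w u * w v * F u v)"
    by (intro sum_mono t)
  finally show ?thesis .
qed

lemma path_map:
  assumes p: "is_path adj p u w" and le: "q' \<le> q" "q < length p"
  shows "is_path adj (map (\<lambda>i. p ! (q' + i)) [0..<Suc (q - q')]) (p ! q') (p ! q)"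
proof -
  let ?s = "map (\<lambda>i. p ! (q' + i)) [0..<Suc (q - q')]"
  have d: "distinct p" and a: "\<forall>i. Suc i < length p \<longrightarrow> adj (p ! i) (p ! Suc i)"
    using p by (auto simp: is_path_def)
  have "distinct ?s"
    unfolding distinct_map
  proof
    show "inj_on (\<lambda>i. p ! (q' + i)) (set [0..<Suc (q - q')])"
      using d le by (auto simp: inj_on_def nth_eq_iff_index_eq)
  qed simp
  moreover have "hd ?s = p ! q'" by (simp del: upt_Suc add: hd_map upt_conv_Cons)
  moreover have "last ?s = p ! q" using le by (simp add: last_map)
  moreover have "\<forall>i. Suc i < length ?s \<longrightarrow> adj (?s ! i) (?s ! Suc i)"
  proof (intro allI impI)
    fix i assume "Suc i < length ?s"
    then have "Suc i \<le> q - q'" by simp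
    then have "Suc (q' + i) < length p" using le by simp
    then have "adj (p ! (q' + i)) (p ! Suc (q' + i))" using a by blast
    then show "adj (?s ! i) (?s ! Suc i)" using \<open>Suc i \<le> q - q'\<close>
      by (simp del: upt_Suc add: nth_map_upt)
  qed
  ultimately show ?thesis by (simp add: is_path_def)
qed

lemma path_extend:
  assumes p: "is_path adj p s v" and a: "adj v u"
  shows "\<exists>q. is_path adj q s u \<and> set q \<subseteq> set p \<union> {u}"
proof (cases "u \<in> set p")
  case True
  then obtain i where i: "i < length p" "p ! i = u" by (auto simp: in_set_conv_nth)
  have ne: "p \<noteq> []" and h: "hd p = s" using p by (auto simp: is_path_def)
  have "is_path adj (map (\<lambda>j. p ! (0 + j)) [0..<Suc (i - 0)]) (p ! 0) (p ! i)"
    by (rule path_map[OF p _ i(1)]) simp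
  moreover have "p ! 0 = s" using ne h by (simp add: hd_conv_nth)
  moreover have "set (map (\<lambda>j. p ! (0 + j)) [0..<Suc (i - 0)]) \<subseteq> set p" using i by auto
  ultimately show ?thesis using i by blast
next
  case False
  have pp: "p \<noteq> []" "hd p = s" "last p = v" "distinct p"
    "\<forall>i. Suc i < length p \<longrightarrow> adj (p ! i) (p ! Suc i)" using p by (auto simp: is_path_def)
  have "\<forall>i. Suc i < length (p @ [u]) \<longrightarrow> adj ((p @ [u]) ! i) ((p @ [u]) ! Suc i)"
  proof (intro allI impI)
    fix i assume i: "Suc i < length (p @ [u])"
    show "adj ((p @ [u]) ! i) ((p @ [u]) ! Suc i)"
    proof (cases "Suc i < length p")
      case True then show ?thesis using pp(5) by (simp add: nth_append)
    next
      case False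
      then have "i = length p - 1" using i by simp
      then have "(p @ [u]) ! i = v" "(p @ [u]) ! Suc i = u" using pp(1,3) False i
        by (auto simp: nth_append last_conv_nth)
      then show ?thesis using a by simp
    qed
  qed
  then have "is_path adj (p @ [u]) s u"
    using pp False unfolding is_path_def by auto
  then show ?thesis by auto
qed


lemma path_in_V:
  assumes g: "graph_on V adj" and p: "is_path adj p s t" and i: "Suc i < length p"
  shows "p ! i \<in> V" "p ! Suc i \<in> V"
  using p i g by (auto simp: is_path_def graph_on_def)

lemma valency_ge2:
  assumes g: "graph_on V adj" and p: "is_path adj p s t" and i: "0 < i" "i < length p - 1"
  shows "valency V adj (p ! i) \<ge> 2"
proof -
  have d: "distinct p" and a: "\<forall>i. Suc i < length p \<longrightarrow> adj (p ! i) (p ! Suc i)"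
    using p by (auto simp: is_path_def)
  have fin: "finite V" using g by (simp add: graph_on_def)
  have a1: "adj (p ! (i - 1)) (p ! i)" using a[rule_format, of "i - 1"] i by simp
  have a2: "adj (p ! i) (p ! Suc i)" using a i by simp
  have s: "\<forall>u w. adj u w \<longrightarrow> adj w u" "\<forall>u w. adj u w \<longrightarrow> u \<in> V \<and> w \<in> V"
    using g by (auto simp: graph_on_def)
  have "p ! (i - 1) \<in> {w \<in> V. adj (p ! i) w}" using a1 s by blast
  moreover have "p ! Suc i \<in> {w \<in> V. adj (p ! i) w}" using a2 s by blast
  moreover have "p ! (i - 1) \<noteq> p ! Suc i" using d i by (simp add: nth_eq_iff_index_eq)
  ultimately have sub: "{p ! (i - 1), p ! Suc i} \<subseteq> {w \<in> V. adj (p ! i) w}"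
    and c2: "card {p ! (i - 1), p ! Suc i} = 2" by auto
  have "card {p ! (i - 1), p ! Suc i} \<le> card {w \<in> V. adj (p ! i) w}"
    by (rule card_mono[OF _ sub]) (use fin in simp)
  then have "2 \<le> card {w \<in> V. adj (p ! i) w}" using c2 by simp
  then show ?thesis by (simp add: valency_def)
qed

lemma orb_from_path:
  assumes t: "is_tree V adj" and p: "is_path adj p s t'" and qq: "q' < q" "q < length p"
    and n1: "p ! q' \<in> nodes V adj" and n2: "p ! q \<in> nodes V adj"
    and btw: "\<forall>m. q' < m \<and> m < q \<longrightarrow> p ! m \<notin> nodes V adj"
  shows "orb_adj V adj (p ! q') (p ! q)"
proof -
  have g: "graph_on V adj" using t by (simp add: is_tree_def)
  have d: "distinct p" using p by (simp add: is_path_def)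
  let ?s = "map (\<lambda>i. p ! (q' + i)) [0..<Suc (q - q')]"
  have sp: "is_path adj ?s (p ! q') (p ! q)" using path_map[OF p _ qq(2)] qq by simp
  have V: "p ! q' \<in> V" "p ! q \<in> V" using n1 n2 by (auto simp: nodes_def)
  have uq: "\<exists>!r. is_path adj r (p ! q') (p ! q)" using t V by (auto simp: is_tree_def)
  have ne: "p ! q' \<noteq> p ! q" using d qq by (simp add: nth_eq_iff_index_eq)
  show ?thesis
    unfolding orb_adj_def
  proof (intro conjI n1 n2 ne allI impI)
    fix r i assume r: "is_path adj r (p ! q') (p ! q)" and i: "0 < i \<and> i < length r - 1"
    have rs: "r = ?s" using uq r sp by blast
    have iq: "i < q - q'" using i rs by simp
    have ri: "r ! i = p ! (q' + i)" using rs iq by (simp del: upt_Suc add: nth_map_upt)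
    have ge: "valency V adj (p ! (q' + i)) \<ge> 2"
      by (rule valency_ge2[OF g p]) (use i iq qq in auto)
    have inV: "p ! (q' + i) \<in> V" by (rule path_in_V(1)[OF g p]) (use iq qq in auto)
    have "p ! (q' + i) \<notin> nodes V adj" using btw iq i by auto
    then have "valency V adj (p ! (q' + i)) < 3" using inV by (simp add: nodes_def)
    then show "valency V adj (r ! i) = 2" using ge ri by simp
  qed
qed

lemma side:
  assumes t: "is_tree V adj" and dn: "distinct ns" and sn: "set ns = nodes V adj"
    and bamboo: "\<forall>p < length ns. \<forall>q < length ns.
                   orb_adj V adj (ns ! p) (ns ! q) \<longleftrightarrow> (p = q + 1 \<or> q = p + 1)"
    and p: "is_path adj p (ns ! i) (ns ! j)" and ij: "i < length ns" "j < length ns"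
    and av: "\<forall>q < length p. p ! q \<noteq> ns ! r"
  shows "i < r \<longleftrightarrow> j < r"
proof -
  have pne: "p \<noteq> []" and hp: "hd p = ns ! i" and lp: "last p = ns ! j"
    using p by (auto simp: is_path_def)
  have p0: "p ! 0 = ns ! i" using pne hp by (simp add: hd_conv_nth)
  have C: "\<forall>m < length ns. p ! q = ns ! m \<longrightarrow> (m < r \<longleftrightarrow> i < r)" if "q < length p" for q
    using that
  proof (induction q rule: less_induct)
    case (less q)
    show ?case
    proof (intro allI impI)
      fix m assume m: "m < length ns" and pq: "p ! q = ns ! m"
      have mr: "m \<noteq> r" using av less.prems pq by metis
      show "m < r \<longleftrightarrow> i < r"
      proof (cases "q = 0")
        case True
        then have "ns ! m = ns ! i" using pq p0 by simp
        then have "m = i" using dn m ij by (simp add: nth_eq_iff_index_eq)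
        then show ?thesis by simp
      next
        case False
        let ?Q = "{q''. q'' < q \<and> p ! q'' \<in> nodes V adj}"
        have finQ: "finite ?Q" by (rule finite_subset[of _ "{..<q}"]) auto
        have "ns ! i \<in> nodes V adj" using sn nth_mem[OF ij(1)] by simp
        then have "0 \<in> ?Q" using False p0 by simp
        then have neQ: "?Q \<noteq> {}" by blast
        define q' where "q' = Max ?Q"
        have q'Q: "q' \<in> ?Q" using Max_in[OF finQ neQ] q'_def by simp
        have btw: "\<forall>m'. q' < m' \<and> m' < q \<longrightarrow> p ! m' \<notin> nodes V adj"
        proof (intro allI impI)
          fix m' assume mm: "q' < m' \<and> m' < q"
          show "p ! m' \<notin> nodes V adj"
          proof
            assume "p ! m' \<in> nodes V adj"
            then have "m' \<in> ?Q" using mm by simp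
            then have "m' \<le> q'" unfolding q'_def by (rule Max_ge[OF finQ])
            then show False using mm by simp
          qed
        qed
        from q'Q have q'q: "q' < q" and nq': "p ! q' \<in> set ns" by (simp_all add: sn)
        then obtain m' where m': "m' < length ns" "p ! q' = ns ! m'" by (auto simp: in_set_conv_nth)
        have q'l: "q' < length p" using q'q less.prems by simp
        have IH: "m' < r \<longleftrightarrow> i < r" using less.IH[OF q'q q'l] m' by blast
        have m'r: "m' \<noteq> r" using av q'l m'(2) by metis
        have nq: "p ! q \<in> nodes V adj" using pq sn nth_mem[OF m] by simp
        have "orb_adj V adj (p ! q') (p ! q)"
          by (rule orb_from_path[OF t p q'q less.prems]) (use q'Q in simp, rule nq, rule btw)
        then have "orb_adj V adj (ns ! m') (ns ! m)" using m'(2) pq by simp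
        then have "m' = m + 1 \<or> m = m' + 1" using bamboo m m'(1) by blast
        then show ?thesis using IH mr m'r by auto
      qed
    qed
  qed
  have "p ! (length p - 1) = ns ! j" using pne lp by (simp add: last_conv_nth)
  moreover have "length p - 1 < length p" using pne by simp
  ultimately show ?thesis using C[of "length p - 1"] ij(2) by blast
qed


theorem mainTheorem5:
  fixes V :: "'v set" and adj :: "'v \<Rightarrow> 'v \<Rightarrow> bool" and e :: "'v \<Rightarrow> int"
    and ns :: "'v list" and a :: "nat \<Rightarrow> real" and b1 bk :: real
    and \<alpha> \<beta> :: "'v \<Rightarrow> real"
  assumes tree: "is_tree V adj"
    and negdef: "neg_definite V adj e"
    and ns_distinct: "distinct ns"
    and ns_nodes: "set ns = nodes V adj"
    and bamboo: "\<forall>p < length ns. \<forall>q < length ns.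
                   orb_adj V adj (ns ! p) (ns ! q) \<longleftrightarrow> (p = q + 1 \<or> q = p + 1)"
    and a_nonneg: "\<forall>l < length ns. a l \<ge> 0"
    and alpha_def: "\<alpha> = (\<lambda>m. \<Sum>l < length ns. a l * vfrak V adj e (ns ! l) m)"
    and b_nonneg: "b1 \<ge> 0" "bk \<ge> 0"
    and beta_def: "\<beta> = (\<lambda>m. \<alpha> m - b1 * vfrak V adj e (ns ! 0) m
                                 - bk * vfrak V adj e (ns ! (length ns - 1)) m)"
    and not_all_neg: "\<exists>l < length ns. \<beta> (ns ! l) \<ge> 0"
  shows "\<exists>i j. i \<le> j \<and> j < length ns \<and>
           (\<forall>l < i. \<beta> (ns ! l) < 0) \<and>
           (\<forall>l. i \<le> l \<and> l \<le> j \<longrightarrow> \<beta> (ns ! l) \<ge> 0) \<and>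
           (\<forall>l. j < l \<and> l < length ns \<longrightarrow> \<beta> (ns ! l) < 0)"
proof -
  have g: "graph_on V adj" using tree by (simp add: is_tree_def)
  have fin: "finite V" using g by (simp add: graph_on_def)
  define N where "N = length ns"
  define F where "F = int_form adj e"
  define D where "D = dualE V adj e"
  have nsN: "ns ! l \<in> nodes V adj" if "l < N" for l
    using nth_mem[of l ns] that ns_nodes N_def by simp
  have nsV: "ns ! l \<in> V" if "l < N" for l using nsN[OF that] by (simp add: nodes_def)
  obtain l0 where l0: "l0 < N" "\<beta> (ns ! l0) \<ge> 0" using not_all_neg N_def by blast
  have Npos: "0 < N" using l0 by simp
  define y where "y = (\<lambda>u. (\<Sum>l<N. a l * D (ns ! l) u) - b1 * D (ns ! 0) u - bk * D (ns ! (N - 1)) u)"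
  have beta_y: "\<beta> (ns ! l) = y (ns ! l)" if l: "l < N" for l
  proof -
    have vf: "vfrak V adj e (ns ! l') (ns ! l) = D (ns ! l') (ns ! l)" if "l' < N" for l'
      unfolding D_def by (rule vfrak_dual[OF g negdef nsV[OF that] nsN[OF l]])
    have "\<alpha> (ns ! l) = (\<Sum>l'<N. a l' * D (ns ! l') (ns ! l))"
      unfolding alpha_def N_def[symmetric] using vf by (intro sum.cong) auto
    then show ?thesis unfolding beta_def y_def N_def[symmetric]
      using vf[OF Npos] vf[of "N - 1"] Npos by simp
  qed
  have dc: "(\<Sum>u\<in>V. D n u * F u w) = - (if n = w then 1 else 0)" if "n \<in> V" "w \<in> V" for n w
    using dual_char[OF g negdef that(1)] that(2) unfolding D_def F_def by blast
  have harm: "(\<Sum>u\<in>V. y u * F u w) \<le> 0" if w: "w \<in> V" "w \<noteq> ns ! 0" "w \<noteq> ns ! (N - 1)" for w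
  proof -
    have "(\<Sum>u\<in>V. y u * F u w) = (\<Sum>l<N. a l * (\<Sum>u\<in>V. D (ns ! l) u * F u w))
        - b1 * (\<Sum>u\<in>V. D (ns ! 0) u * F u w) - bk * (\<Sum>u\<in>V. D (ns ! (N - 1)) u * F u w)"
      unfolding y_def
      by (simp add: algebra_simps sum_subtractf sum.distrib sum_distrib_left sum_distrib_right sum.swap[of _ V "{..<N}"])
    also have "\<dots> = (\<Sum>l<N. a l * - (if ns ! l = w then 1 else 0))"
      using dc nsV Npos w by simp
    also have "\<dots> \<le> 0" using a_nonneg N_def by (intro sum_nonpos) auto
    finally show ?thesis .
  qed
  have key: "\<beta> (ns ! l2) \<ge> 0"
    if ll: "l1 < l2" "l2 < l3" "l3 < N" and b13: "\<beta> (ns ! l1) \<ge> 0" "\<beta> (ns ! l3) \<ge> 0" for l1 l2 l3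
  proof (rule ccontr)
    assume neg: "\<not> \<beta> (ns ! l2) \<ge> 0"
    define n1 where "n1 = ns ! l1"
    define n2 where "n2 = ns ! l2"
    define n3 where "n3 = ns ! l3"
    have y2: "y n2 < 0" using neg beta_y ll unfolding n2_def by simp
    have y13: "y n1 \<ge> 0" "y n3 \<ge> 0" using b13 beta_y ll unfolding n1_def n3_def by auto
    define S where "S = {v \<in> V. \<exists>p. is_path adj p n2 v \<and> n1 \<notin> set p \<and> n3 \<notin> set p}"
    have SV: "S \<subseteq> V" by (auto simp: S_def)
    have n12: "n2 \<noteq> n1" "n2 \<noteq> n3"
      using ns_distinct ll unfolding n1_def n2_def n3_def N_def by (simp_all add: nth_eq_iff_index_eq)
    have n2S: "n2 \<in> S"
    proof -
      have "is_path adj [n2] n2 n2" by (simp add: is_path_def)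
      then show ?thesis using n12 nsV ll unfolding S_def n2_def by auto
    qed
    have avoid: "\<forall>q<length p. p ! q \<noteq> ns ! r" if "ns ! r \<notin> set p" for p r
      using that nth_mem by metis
    have not0: "ns ! 0 \<notin> S"
    proof
      assume "ns ! 0 \<in> S"
      then obtain p where p: "is_path adj p n2 (ns ! 0)" "n1 \<notin> set p" "n3 \<notin> set p"
        unfolding S_def by blast
      have "l2 < l1 \<longleftrightarrow> 0 < l1"
        by (rule side[OF tree ns_distinct ns_nodes bamboo p(1)[unfolded n2_def]])
          (use ll Npos N_def avoid[OF p(2)[unfolded n1_def]] in auto)
      then have "l1 = 0" using ll by simp
      then have "n1 \<in> set p" using p(1) unfolding n1_def is_path_def
        by (metis last_in_set)
      then show False using p(2) by simp
    qed
    have notN: "ns ! (N - 1) \<notin> S"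
    proof
      assume "ns ! (N - 1) \<in> S"
      then obtain p where p: "is_path adj p n2 (ns ! (N - 1))" "n1 \<notin> set p" "n3 \<notin> set p"
        unfolding S_def by blast
      have "l2 < l3 \<longleftrightarrow> N - 1 < l3"
        by (rule side[OF tree ns_distinct ns_nodes bamboo p(1)[unfolded n2_def]])
          (use ll Npos N_def avoid[OF p(3)[unfolded n3_def]] in auto)
      then show False using ll by simp
    qed
    have off: "\<forall>u v. u \<noteq> v \<longrightarrow> F u v \<ge> 0" by (simp add: F_def int_form_def)
    have harmS: "\<forall>v\<in>S. (\<Sum>u\<in>V. y u * F u v) \<le> 0"
    proof
      fix v assume v: "v \<in> S"
      then have "v \<noteq> ns ! 0" "v \<noteq> ns ! (N - 1)" using not0 notN by auto
      then show "(\<Sum>u\<in>V. y u * F u v) \<le> 0" using harm v SV by auto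
    qed
    have bd: "\<forall>v\<in>S. \<forall>u\<in>V. u \<notin> S \<longrightarrow> F u v > 0 \<longrightarrow> y u \<ge> 0"
    proof (intro ballI impI)
      fix v u assume v: "v \<in> S" and u: "u \<in> V" "u \<notin> S" and F: "F u v > 0"
      have uv: "u \<noteq> v" using u v by auto
      then have "adj u v" using F by (simp add: F_def int_form_def split: if_splits)
      then have avu: "adj v u" using g by (simp add: graph_on_def)
      obtain p where p: "is_path adj p n2 v" "n1 \<notin> set p" "n3 \<notin> set p"
        using v unfolding S_def by blast
      obtain q where q: "is_path adj q n2 u" "set q \<subseteq> set p \<union> {u}"
        using path_extend[OF p(1) avu] by blast
      have "u = n1 \<or> u = n3"
      proof (rule ccontr)
        assume "\<not> (u = n1 \<or> u = n3)"
        then have "n1 \<notin> set q" "n3 \<notin> set q" using q(2) p by auto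
        then have "u \<in> S" using q(1) u(1) unfolding S_def by blast
        then show False using u by simp
      qed
      then show "y u \<ge> 0" using y13 by auto
    qed
    define w where "w = (\<lambda>u. if u \<in> S then min (y u) 0 else 0)"
    have E: "(\<Sum>u\<in>V. \<Sum>v\<in>V. w u * w v * F u v) \<ge> 0"
      unfolding w_def by (rule energy[OF fin SV off harmS bd])
    have "w n2 \<noteq> 0" using y2 n2S by (simp add: w_def)
    then have "pair V adj e w w < 0" using negdef n2S SV by (auto simp: neg_definite_def)
    moreover have "pair V adj e w w = (\<Sum>u\<in>V. \<Sum>v\<in>V. w u * w v * F u v)"
      by (simp add: pair_def F_def)
    ultimately show False using E by simp
  qed
  define P where "P = (\<lambda>l. l < N \<and> \<beta> (ns ! l) \<ge> 0)"
  have P0: "P l0" using l0 by (simp add: P_def)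
  define i where "i = (LEAST l. P l)"
  define j where "j = (GREATEST l. P l)"
  have bnd: "\<forall>y. P y \<longrightarrow> y \<le> N" by (auto simp: P_def)
  have Pi: "P i" unfolding i_def by (rule LeastI[of P l0, OF P0])
  have Pj: "P j" unfolding j_def by (rule GreatestI_nat[of P l0 N, OF P0]) (use bnd in auto)
  have il0: "i \<le> l0" unfolding i_def by (rule Least_le[of P l0, OF P0])
  have l0j: "l0 \<le> j" unfolding j_def by (rule Greatest_le_nat[of P l0 N, OF P0]) (use bnd in auto)
  show ?thesis
  proof (intro exI conjI allI impI)
    show "i \<le> j" using il0 l0j by simp
    show "j < length ns" using Pj by (simp add: P_def N_def)
    fix l
    show "\<beta> (ns ! l) < 0" if "l < i"
    proof -
      have "\<not> P l" using that not_less_Least unfolding i_def by blast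
      then show ?thesis using that Pj il0 l0j l0 by (auto simp: P_def)
    qed
    show "\<beta> (ns ! l) \<ge> 0" if "i \<le> l \<and> l \<le> j"
    proof (cases "l = i \<or> l = j")
      case True then show ?thesis using Pi Pj by (auto simp: P_def)
    next
      case False
      then have "i < l" "l < j" using that by auto
      then show ?thesis using key[of i l j] Pi Pj by (simp add: P_def)
    qed
    show "\<beta> (ns ! l) < 0" if "j < l \<and> l < length ns"
    proof (rule ccontr)
      assume "\<not> \<beta> (ns ! l) < 0"
      then have "P l" using that by (simp add: P_def N_def)
      then have "l \<le> j" unfolding j_def by (rule Greatest_le_nat[of P l N]) (use bnd in auto)
      then show False using that by simp
    qed
  qed
qed

end
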